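(* Let $\mathcal{F}$ be the family of subsets $C\subset\mathbb{Z}^n$ that are bounded below, i.e. for which there exist $b_1,\dots,b_n\in\mathbb{Z}$ with $\alpha_i\ge b_i$ for all $\alpha\in C$ and all $i$. For $C\in\mathcal{F}$ define $m_C:\mathbb{Z}^n\to\mathbb{Z}$ by $m_C(\alpha)=\#\{i\in\{1,\dots,n\}\mid \alpha+e_i\in C\}$, i.e. $m_C=\sum_{i=1}^n\mathbb{1}_{C-e_i}$. Then the map $\mathcal{F}\to\{f:\mathbb{Z}^n\to\mathbb{Z}\}$, $C\mapsto m_C$, is injective.
   Context: $e_1,\dots,e_n$ denotes the standard basis of $\mathbb{Z}^n$ and $\mathbb{1}_X$ the indicator function of a set $X$. *)

theory Defs
  imports "HOL-Analysis.Analysis"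
begin

definition std_basis :: "'n::finite \<Rightarrow> int ^ 'n" where
  "std_basis i = (\<chi> j. if j = i then 1 else 0)"

definition bounded_below :: "(int ^ 'n::finite) set \<Rightarrow> bool" where
  "bounded_below C \<longleftrightarrow> (\<exists>b :: int ^ 'n. \<forall>\<alpha>\<in>C. \<forall>i. \<alpha> $ i \<ge> b $ i)"

definition mC :: "(int ^ 'n::finite) set \<Rightarrow> int ^ 'n \<Rightarrow> int" where
  "mC C \<alpha> = int (card {i. \<alpha> + std_basis i \<in> C})"

end

theory Submission
  imports Defs
begin

theorem proposition3p2:
  "inj_on (mC :: (int ^ 'n::finite) set \<Rightarrow> int ^ 'n \<Rightarrow> int) {C. bounded_below C}"
proof (rule inj_onI)
  fix C D :: "(int ^ 'n) set"
  assume hC: "C \<in> {C. bounded_below C}" and hD: "D \<in> {C. bounded_below C}"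
    and eq: "mC C = mC D"
  show "C = D"
  proof (rule ccontr)
    assume ne: "C \<noteq> D"
    define S where "S = (C - D) \<union> (D - C)"
    obtain b1 :: "int ^ 'n" where b1: "\<forall>\<alpha>\<in>C. \<forall>i. \<alpha> $ i \<ge> b1 $ i"
      using hC unfolding bounded_below_def by auto
    obtain b2 :: "int ^ 'n" where b2: "\<forall>\<alpha>\<in>D. \<forall>i. \<alpha> $ i \<ge> b2 $ i"
      using hD unfolding bounded_below_def by auto
    define b :: "int ^ 'n" where "b = (\<chi> j. min (b1 $ j) (b2 $ j))"
    have bS: "\<forall>\<gamma>\<in>S. \<forall>j. b $ j \<le> \<gamma> $ j"
    proof (intro ballI allI)
      fix \<gamma> j assume "\<gamma> \<in> S"
      then have "\<gamma> \<in> C \<or> \<gamma> \<in> D" unfolding S_def by blast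
      then show "b $ j \<le> \<gamma> $ j" using b1 b2 unfolding b_def by (auto simp: min_le_iff_disj)
    qed
    obtain x where xS: "x \<in> S" using ne unfolding S_def by blast
    define f where "f = (\<lambda>\<gamma>::int^'n. nat (\<Sum>j\<in>UNIV. \<gamma> $ j - b $ j))"
    obtain g0 where g0: "g0 \<in> S" "\<forall>y. y \<in> S \<longrightarrow> f g0 \<le> f y"
      using ex_has_least_nat[of "\<lambda>y. y \<in> S" x f] xS by blast
    obtain k :: 'n where True by blast
    define h where "h = (\<lambda>\<gamma>::int^'n. nat (\<gamma> $ k - b $ k))"
    obtain \<gamma> where g: "\<gamma> \<in> S \<and> f \<gamma> = f g0" "\<forall>y. y \<in> S \<and> f y = f g0 \<longrightarrow> h \<gamma> \<le> h y"
      using ex_has_least_nat[of "\<lambda>y. y \<in> S \<and> f y = f g0" g0 h] g0 by blast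
    define \<alpha> where "\<alpha> = \<gamma> - std_basis k"
    have notS: "\<alpha> + std_basis i \<notin> S" if ik: "i \<noteq> k" for i
    proof
      assume dS: "\<alpha> + std_basis i \<in> S"
      define \<delta> where "\<delta> = \<alpha> + std_basis i"
      have comp: "\<delta> $ j = \<gamma> $ j - (if j = k then 1 else 0) + (if j = i then 1 else 0)" for j
        unfolding \<delta>_def \<alpha>_def std_basis_def by simp
      have "(\<Sum>j\<in>UNIV. \<delta> $ j - b $ j) = (\<Sum>j\<in>UNIV. (\<gamma> $ j - b $ j) - (if j = k then 1 else 0) + (if j = i then 1 else 0))"
        by (rule sum.cong) (auto simp: comp)
      also have "\<dots> = (\<Sum>j\<in>UNIV. \<gamma> $ j - b $ j)"
        by (simp add: sum.distrib sum_subtractf)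
      finally have "f \<delta> = f \<gamma>" unfolding f_def by simp
      with g dS have "h \<gamma> \<le> h \<delta>" unfolding \<delta>_def by auto
      moreover have "\<delta> $ k = \<gamma> $ k - 1" using comp[of k] ik by simp
      moreover have "b $ k \<le> \<delta> $ k" using bS dS unfolding \<delta>_def by auto
      ultimately show False unfolding h_def by simp
    qed
    have gk: "\<alpha> + std_basis k = \<gamma>" unfolding \<alpha>_def by simp
    define A where "A = {i. \<alpha> + std_basis i \<in> C}"
    define B where "B = {i. \<alpha> + std_basis i \<in> D}"
    have same: "i \<in> A \<longleftrightarrow> i \<in> B" if "i \<noteq> k" for i
      using notS[OF that] unfolding A_def B_def S_def by blast
    have "card A = card B"
      using fun_cong[OF eq, of \<alpha>] unfolding mC_def A_def B_def by simp
    moreover have "card A \<noteq> card B"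
    proof (cases "\<gamma> \<in> C")
      case True
      then have "\<gamma> \<notin> D" using g unfolding S_def by blast
      then have "A = insert k B" "k \<notin> B" using True same gk unfolding A_def B_def by (auto, metis)
      then show ?thesis by simp
    next
      case False
      then have "\<gamma> \<in> D" using g unfolding S_def by blast
      then have "B = insert k A" "k \<notin> A" using False same gk unfolding A_def B_def by (auto, metis)
      then show ?thesis by simp
    qed
    ultimately show False by simp
  qed
qed

end
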